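(* Let \(X\) be a complete metric space, \(n\geq 1\), and \(T\colon \mathcal{D}^n(X)\to\mathbb{R}\) a multilinear functional. Then \(T\) is a current if and only if it is an \(\mathbf{L}^\infty\)-current. Moreover, \(\|T\|=\|T\|_{\mathbf{L}^\infty}\).
   Context: \(\mathcal{D}^n(X)\) is the set of pairs \((f,\pi)\) with \(f\colon X\to\mathbb{R}\) bounded Lipschitz and \(\pi=(\pi^{(1)},\dots,\pi^{(n)})\colon X\to\mathbb{R}^n\) Lipschitz; "multilinear" means multilinear in \((f,\pi^{(1)},\dots,\pi^{(n)})\). For a map \(g\) between metric spaces, \(\mathrm{Lip}(g)\) denotes its best Lipschitz constant. Given a seminorm \(\mathbf{L}\colon \mathrm{Lip}(X,\mathbb{R}^n)\to\mathbb{R}\) (a "Lipschitz norm"), a multilinear \(T\colon\mathcal{D}^n(X)\to\mathbb{R}\) is an \(\mathbf{L}\)-current if: (1) whenever \(\pi_i\to\pi\) pointwise with \(\pi\in\mathrm{Lip}(X,\mathbb{R}^n)\) and \(\sup_i\mathbf{L}(\pi_i)<\infty\), then \(T(f,\pi_i)\to T(f,\pi)\); (2) \(T(f,\pi)=0\) whenever some \(\pi^{(i)}\) is constant on an open neighborhood of \(\mathrm{spt}(f)\); (3) there is a finite Borel measure \(\mu\) on \(X\) with \(|T(f,\pi)|\le \mathbf{L}(\pi)^n\int_X|f|\,d\mu\) for all \((f,\pi)\in\mathcal{D}^n(X)\). The minimal such \(\mu\) is the mass measure \(\|T\|_{\mathbf{L}}\). \(T\) is a current (in the sense of Ambrosio–Kirchheim)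 if it satisfies the same three conditions with "\(\sup_i\mathbf{L}(\pi_i)<\infty\)" replaced by "\(\sup_{i,j}\mathrm{Lip}(\pi_i^{(j)})<\infty\)" and with \(\mathbf{L}(\pi)^n\) replaced by \(\prod_{i=1}^n\mathrm{Lip}(\pi^{(i)})\); its mass measure \(\|T\|\) is the minimal measure \(\mu\) in the corresponding inequality. \(\mathbf{L}^\infty(\pi)=\max_{i=1,\dots,n}\mathrm{Lip}(\pi^{(i)})\). *)

theory Defs
  imports "HOL-Analysis.Analysis"
begin

text \<open>The metric space X is the type 'a. An n-tuple pi = (pi^(1),...,pi^(n)) of real functions
  is represented as a function pi :: 'n => 'a => real, where the finite type 'n indexes the
  components (n = CARD('n) >= 1 automatically). A functional T on D^n(X) is a function
  T :: ('a => real) => ('n => 'a => real) => real; only its values on D^n(X) matter.\<close>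

definition is_lipschitz :: "('a::metric_space \<Rightarrow> real) \<Rightarrow> bool" where
  "is_lipschitz g \<longleftrightarrow> (\<exists>C. C-lipschitz_on UNIV g)"

definition lipconst :: "('a::metric_space \<Rightarrow> real) \<Rightarrow> real" where
  "lipconst g = Inf {C. 0 \<le> C \<and> C-lipschitz_on UNIV g}"

definition in_D :: "('a::metric_space \<Rightarrow> real) \<Rightarrow> ('n \<Rightarrow> 'a \<Rightarrow> real) \<Rightarrow> bool" where
  "in_D f \<pi> \<longleftrightarrow> is_lipschitz f \<and> bounded (range f) \<and> (\<forall>i. is_lipschitz (\<pi> i))"

definition multilinear_D ::
  "(('a::metric_space \<Rightarrow> real) \<Rightarrow> ('n \<Rightarrow> 'a \<Rightarrow> real) \<Rightarrow> real) \<Rightarrow> bool" where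
  "multilinear_D T \<longleftrightarrow>
     (\<forall>f g \<pi> a b. in_D f \<pi> \<and> in_D g \<pi> \<longrightarrow>
        T (\<lambda>x. a * f x + b * g x) \<pi> = a * T f \<pi> + b * T g \<pi>) \<and>
     (\<forall>f \<pi> i p q a b. in_D f (\<pi>(i := p)) \<and> in_D f (\<pi>(i := q)) \<longrightarrow>
        T f (\<pi>(i := (\<lambda>x. a * p x + b * q x))) = a * T f (\<pi>(i := p)) + b * T f (\<pi>(i := q)))"

definition spt :: "('a::metric_space \<Rightarrow> real) \<Rightarrow> 'a set" where
  "spt f = closure {x. f x \<noteq> 0}"

definition locality_D ::
  "(('a::metric_space \<Rightarrow> real) \<Rightarrow> ('n \<Rightarrow> 'a \<Rightarrow> real) \<Rightarrow> real) \<Rightarrow> bool" where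
  "locality_D T \<longleftrightarrow>
     (\<forall>f \<pi>. in_D f \<pi> \<and>
        (\<exists>i U c. open U \<and> spt f \<subseteq> U \<and> (\<forall>x\<in>U. \<pi> i x = c)) \<longrightarrow> T f \<pi> = 0)"

definition finite_borel_measure :: "'a::metric_space measure \<Rightarrow> bool" where
  "finite_borel_measure \<mu> \<longleftrightarrow> sets \<mu> = sets borel \<and> finite_measure \<mu>"

definition minimal_measure :: "('a::metric_space measure \<Rightarrow> bool) \<Rightarrow> 'a measure \<Rightarrow> bool" where
  "minimal_measure P \<mu> \<longleftrightarrow> P \<mu> \<and>
     (\<forall>\<nu>. P \<nu> \<longrightarrow> (\<forall>A\<in>sets borel. emeasure \<mu> A \<le> emeasure \<nu> A))"

definition L_mass_bound ::
  "(('n::finite \<Rightarrow> 'a::metric_space \<Rightarrow> real) \<Rightarrow> real) \<Rightarrow>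
   (('a \<Rightarrow> real) \<Rightarrow> ('n \<Rightarrow> 'a \<Rightarrow> real) \<Rightarrow> real) \<Rightarrow> 'a measure \<Rightarrow> bool" where
  "L_mass_bound L T \<mu> \<longleftrightarrow> finite_borel_measure \<mu> \<and>
     (\<forall>f \<pi>. in_D f \<pi> \<longrightarrow> \<bar>T f \<pi>\<bar> \<le> L \<pi> ^ CARD('n) * integral\<^sup>L \<mu> (\<lambda>x. \<bar>f x\<bar>))"

definition L_current ::
  "(('n::finite \<Rightarrow> 'a::metric_space \<Rightarrow> real) \<Rightarrow> real) \<Rightarrow>
   (('a \<Rightarrow> real) \<Rightarrow> ('n \<Rightarrow> 'a \<Rightarrow> real) \<Rightarrow> real) \<Rightarrow> bool" where
  "L_current L T \<longleftrightarrow> multilinear_D T \<and>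
     (\<forall>f \<pi> \<pi>s. in_D f \<pi> \<and> (\<forall>k. in_D f (\<pi>s k)) \<and>
        (\<forall>i x. (\<lambda>k. \<pi>s k i x) \<longlonglongrightarrow> \<pi> i x) \<and>
        (\<exists>C. \<forall>k. L (\<pi>s k) \<le> C)
        \<longrightarrow> (\<lambda>k. T f (\<pi>s k)) \<longlonglongrightarrow> T f \<pi>) \<and>
     locality_D T \<and>
     (\<exists>\<mu>. L_mass_bound L T \<mu>)"

definition L_mass ::
  "(('n::finite \<Rightarrow> 'a::metric_space \<Rightarrow> real) \<Rightarrow> real) \<Rightarrow>
   (('a \<Rightarrow> real) \<Rightarrow> ('n \<Rightarrow> 'a \<Rightarrow> real) \<Rightarrow> real) \<Rightarrow> 'a measure \<Rightarrow> bool" where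
  "L_mass L T \<mu> \<longleftrightarrow> minimal_measure (L_mass_bound L T) \<mu>"

definition Linf :: "(('n::finite) \<Rightarrow> 'a::metric_space \<Rightarrow> real) \<Rightarrow> real" where
  "Linf \<pi> = Max (range (\<lambda>i. lipconst (\<pi> i)))"

definition AK_mass_bound ::
  "(('a::metric_space \<Rightarrow> real) \<Rightarrow> (('n::finite) \<Rightarrow> 'a \<Rightarrow> real) \<Rightarrow> real) \<Rightarrow> 'a measure \<Rightarrow> bool" where
  "AK_mass_bound T \<mu> \<longleftrightarrow> finite_borel_measure \<mu> \<and>
     (\<forall>f \<pi>. in_D f \<pi> \<longrightarrow>
        \<bar>T f \<pi>\<bar> \<le> (\<Prod>i\<in>UNIV. lipconst (\<pi> i)) * integral\<^sup>L \<mu> (\<lambda>x. \<bar>f x\<bar>))"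

definition AK_current ::
  "(('a::metric_space \<Rightarrow> real) \<Rightarrow> (('n::finite) \<Rightarrow> 'a \<Rightarrow> real) \<Rightarrow> real) \<Rightarrow> bool" where
  "AK_current T \<longleftrightarrow> multilinear_D T \<and>
     (\<forall>f \<pi> \<pi>s. in_D f \<pi> \<and> (\<forall>k. in_D f (\<pi>s k)) \<and>
        (\<forall>i x. (\<lambda>k. \<pi>s k i x) \<longlonglongrightarrow> \<pi> i x) \<and>
        (\<exists>C. \<forall>k i. lipconst (\<pi>s k i) \<le> C)
        \<longrightarrow> (\<lambda>k. T f (\<pi>s k)) \<longlonglongrightarrow> T f \<pi>) \<and>
     locality_D T \<and>
     (\<exists>\<mu>. AK_mass_bound T \<mu>)"

definition AK_mass ::
  "(('a::metric_space \<Rightarrow> real) \<Rightarrow> (('n::finite) \<Rightarrow> 'a \<Rightarrow> real) \<Rightarrow> real) \<Rightarrow> 'a measure \<Rightarrow> bool" where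
  "AK_mass T \<mu> \<longleftrightarrow> minimal_measure (AK_mass_bound T) \<mu>"

end

theory Submission
  imports Defs
begin

lemma lipconst_nonneg:
  assumes "is_lipschitz g" shows "0 \<le> lipconst g"
proof -
  from assms obtain C where "C-lipschitz_on UNIV g" unfolding is_lipschitz_def by blast
  then have ne: "{C. 0 \<le> C \<and> C-lipschitz_on UNIV g} \<noteq> {}" using lipschitz_on_nonneg by blast
  show ?thesis unfolding lipconst_def by (rule cInf_greatest[OF ne]) auto
qed

lemma lipconst_le:
  assumes "C-lipschitz_on UNIV g" shows "lipconst g \<le> C"
  unfolding lipconst_def
  by (rule cInf_lower) (use assms lipschitz_on_nonneg in auto)

lemma lipconst_lipschitz:
  assumes "is_lipschitz g" shows "(lipconst g)-lipschitz_on UNIV g"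
proof (rule lipschitz_onI)
  show "0 \<le> lipconst g" using lipconst_nonneg[OF assms] .
  fix x y :: 'a
  from assms obtain C where "C-lipschitz_on UNIV g" unfolding is_lipschitz_def by blast
  then have ne: "{C. 0 \<le> C \<and> C-lipschitz_on UNIV g} \<noteq> {}" using lipschitz_on_nonneg by blast
  show "dist (g x) (g y) \<le> lipconst g * dist x y"
  proof (cases "dist x y = 0")
    case True then show ?thesis by simp
  next
    case False
    then have pos: "dist x y > 0" by simp
    have "dist (g x) (g y) / dist x y \<le> lipconst g"
      unfolding lipconst_def
    proof (rule cInf_greatest[OF ne])
      fix C assume "C \<in> {C. 0 \<le> C \<and> C-lipschitz_on UNIV g}"
      then have "dist (g x) (g y) \<le> C * dist x y" using lipschitz_onD by blast
      then show "dist (g x) (g y) / dist x y \<le> C" using pos by (simp add: divide_simps)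
    qed
    then show ?thesis using pos by (simp add: divide_simps)
  qed
qed

lemma lipconst_zero_const:
  assumes "is_lipschitz g" "lipconst g = 0" shows "g x = g y"
  using lipschitz_onD[OF lipconst_lipschitz[OF assms(1)], of x y] assms(2) by simp

lemma Linf_ge:
  fixes \<pi> :: "'n::finite \<Rightarrow> 'a::metric_space \<Rightarrow> real"
  shows "lipconst (\<pi> i) \<le> Linf \<pi>"
  unfolding Linf_def by (rule Max_ge) auto

lemma Linf_le_iff:
  fixes \<pi> :: "'n::finite \<Rightarrow> 'a::metric_space \<Rightarrow> real"
  shows "Linf \<pi> \<le> C \<longleftrightarrow> (\<forall>i. lipconst (\<pi> i) \<le> C)"
  unfolding Linf_def by (subst Max_le_iff) auto

lemma cont_equiv:
  fixes \<pi>s :: "nat \<Rightarrow> 'n::finite \<Rightarrow> 'a::metric_space \<Rightarrow> real"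
  shows "(\<exists>C. \<forall>k. Linf (\<pi>s k) \<le> C) \<longleftrightarrow> (\<exists>C. \<forall>k i. lipconst (\<pi>s k i) \<le> C)"
  using Linf_le_iff by metis

lemma AK_imp_L:
  fixes T :: "('a::metric_space \<Rightarrow> real) \<Rightarrow> ('n::finite \<Rightarrow> 'a \<Rightarrow> real) \<Rightarrow> real"
  assumes "AK_mass_bound T \<mu>" shows "L_mass_bound Linf T \<mu>"
  unfolding L_mass_bound_def
proof (intro conjI allI impI)
  show "finite_borel_measure \<mu>" using assms unfolding AK_mass_bound_def by auto
  fix f and \<pi> :: "'n \<Rightarrow> 'a \<Rightarrow> real" assume D: "in_D f \<pi>"
  then have lip: "\<And>i. is_lipschitz (\<pi> i)" unfolding in_D_def by auto
  have "(\<Prod>i\<in>UNIV. lipconst (\<pi> i)) \<le> (\<Prod>i\<in>(UNIV::'n set). Linf \<pi>)"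
    by (rule prod_mono) (use lip lipconst_nonneg Linf_ge in auto)
  also have "\<dots> = Linf \<pi> ^ CARD('n)" by simp
  finally have P: "(\<Prod>i\<in>UNIV. lipconst (\<pi> i)) \<le> Linf \<pi> ^ CARD('n)" .
  have I: "0 \<le> integral\<^sup>L \<mu> (\<lambda>x. \<bar>f x\<bar>)" by simp
  have "\<bar>T f \<pi>\<bar> \<le> (\<Prod>i\<in>UNIV. lipconst (\<pi> i)) * integral\<^sup>L \<mu> (\<lambda>x. \<bar>f x\<bar>)"
    using assms D unfolding AK_mass_bound_def by auto
  also have "\<dots> \<le> Linf \<pi> ^ CARD('n) * integral\<^sup>L \<mu> (\<lambda>x. \<bar>f x\<bar>)"
    by (rule mult_right_mono[OF P I])
  finally show "\<bar>T f \<pi>\<bar> \<le> Linf \<pi> ^ CARD('n) * integral\<^sup>L \<mu> (\<lambda>x. \<bar>f x\<bar>)" .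
qed


lemma is_lipschitz_cmult:
  assumes "is_lipschitz g" shows "is_lipschitz (\<lambda>x. c * g x)"
  using assms lipschitz_on_cmult_real unfolding is_lipschitz_def by blast

lemma scale_lemma:
  fixes T :: "('a::metric_space \<Rightarrow> real) \<Rightarrow> ('n::finite \<Rightarrow> 'a \<Rightarrow> real) \<Rightarrow> real"
  assumes ml: "multilinear_D T" and D: "in_D f \<pi>" and fin: "finite S"
  shows "T f (\<lambda>i. if i \<in> S then (\<lambda>x. c i * \<pi> i x) else \<pi> i) = (\<Prod>i\<in>S. c i) * T f \<pi>"
  using fin
proof (induction S rule: finite_induct)
  case empty
  then show ?case by simp
next
  case (insert j S)
  define \<rho> where "\<rho> = (\<lambda>i. if i \<in> S then (\<lambda>x. c i * \<pi> i x) else \<pi> i)"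
  have Dr: "in_D f \<rho>" using D is_lipschitz_cmult unfolding in_D_def \<rho>_def by auto
  have rj: "\<rho> j = \<pi> j" using insert(2) unfolding \<rho>_def by simp
  have rr: "\<rho>(j := \<pi> j) = \<rho>" using rj by auto
  have eq: "(\<lambda>i. if i \<in> insert j S then (\<lambda>x. c i * \<pi> i x) else \<pi> i)
      = \<rho>(j := (\<lambda>x. c j * \<pi> j x + 0 * \<pi> j x))"
    unfolding \<rho>_def by (rule ext) auto
  have "T f (\<rho>(j := (\<lambda>x. c j * \<pi> j x + 0 * \<pi> j x)))
      = c j * T f (\<rho>(j := \<pi> j)) + 0 * T f (\<rho>(j := \<pi> j))"
  proof -
    have "\<forall>f \<pi> i p q a b. in_D f (\<pi>(i := p)) \<and> in_D f (\<pi>(i := q)) \<longrightarrow>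
        T f (\<pi>(i := (\<lambda>x. a * p x + b * q x))) = a * T f (\<pi>(i := p)) + b * T f (\<pi>(i := q))"
      using ml unfolding multilinear_D_def by blast
    then have "in_D f (\<rho>(j := \<pi> j)) \<and> in_D f (\<rho>(j := \<pi> j)) \<longrightarrow>
        T f (\<rho>(j := (\<lambda>x. c j * \<pi> j x + 0 * \<pi> j x))) = c j * T f (\<rho>(j := \<pi> j)) + 0 * T f (\<rho>(j := \<pi> j))"
      by (elim allE)
    then show ?thesis using Dr rr by simp
  qed
  then have "T f (\<lambda>i. if i \<in> insert j S then (\<lambda>x. c i * \<pi> i x) else \<pi> i) = c j * T f \<rho>"
    using eq rr by simp
  also have "T f \<rho> = (\<Prod>i\<in>S. c i) * T f \<pi>" unfolding \<rho>_def by (rule insert.IH)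
  finally show ?case using insert(1,2) by simp
qed

lemma L_imp_AK:
  fixes T :: "('a::metric_space \<Rightarrow> real) \<Rightarrow> ('n::finite \<Rightarrow> 'a \<Rightarrow> real) \<Rightarrow> real"
  assumes ml: "multilinear_D T" and loc: "locality_D T" and B: "L_mass_bound Linf T \<mu>"
  shows "AK_mass_bound T \<mu>"
  unfolding AK_mass_bound_def
proof (intro conjI allI impI)
  show "finite_borel_measure \<mu>" using B unfolding L_mass_bound_def by auto
  fix f and \<pi> :: "'n \<Rightarrow> 'a \<Rightarrow> real" assume D: "in_D f \<pi>"
  then have lip: "\<And>i. is_lipschitz (\<pi> i)" unfolding in_D_def by auto
  have I: "0 \<le> integral\<^sup>L \<mu> (\<lambda>x. \<bar>f x\<bar>)" by simp
  have Pn: "0 \<le> (\<Prod>i\<in>UNIV. lipconst (\<pi> i))"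
    by (rule prod_nonneg) (use lip lipconst_nonneg in auto)
  show "\<bar>T f \<pi>\<bar> \<le> (\<Prod>i\<in>UNIV. lipconst (\<pi> i)) * integral\<^sup>L \<mu> (\<lambda>x. \<bar>f x\<bar>)"
  proof (cases "\<exists>i. lipconst (\<pi> i) = 0")
    case True
    then obtain i where "lipconst (\<pi> i) = 0" by blast
    then have "\<forall>x\<in>UNIV. \<pi> i x = \<pi> i undefined" using lipconst_zero_const lip by blast
    then have "T f \<pi> = 0" using loc D unfolding locality_D_def by blast
    then show ?thesis using Pn I by simp
  next
    case False
    define L where "L = (\<lambda>i. lipconst (\<pi> i))"
    have Lpos: "L i > 0" for i
    proof -
      have "0 \<le> L i" "L i \<noteq> 0" using False lipconst_nonneg[OF lip[of i]] unfolding L_def by auto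
      then show ?thesis by simp
    qed
    define \<sigma> where "\<sigma> = (\<lambda>i. if i \<in> UNIV then (\<lambda>x. (1 / L i) * \<pi> i x) else \<pi> i)"
    have "\<And>i. is_lipschitz (\<sigma> i)" unfolding \<sigma>_def using is_lipschitz_cmult[OF lip] by (simp only: UNIV_I if_True)
    then have Ds: "in_D f \<sigma>" using D unfolding in_D_def by blast
    have Ts: "T f \<sigma> = (\<Prod>i\<in>UNIV. 1 / L i) * T f \<pi>"
      unfolding \<sigma>_def by (rule scale_lemma[OF ml D]) simp
    have "\<And>i. lipconst (\<sigma> i) \<le> 1"
    proof -
      fix i
      have "(\<bar>1 / L i\<bar> * L i)-lipschitz_on UNIV (\<lambda>x. (1 / L i) * \<pi> i x)"
        unfolding L_def by (rule lipschitz_on_cmult_real[OF lipconst_lipschitz[OF lip[of i]]])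
      moreover have "\<bar>1 / L i\<bar> * L i = 1" using Lpos[of i] by simp
      ultimately have "1-lipschitz_on UNIV (\<lambda>x. (1 / L i) * \<pi> i x)" by (simp only:)
      then have "1-lipschitz_on UNIV (\<sigma> i)" unfolding \<sigma>_def by (simp only: UNIV_I if_True)
      then show "lipconst (\<sigma> i) \<le> 1" by (rule lipconst_le)
    qed
    then have L1: "Linf \<sigma> \<le> 1" using Linf_le_iff by blast
    have "0 \<le> lipconst (\<sigma> i)" for i using lipconst_nonneg Ds unfolding in_D_def by blast
    then have L0: "0 \<le> Linf \<sigma>" using Linf_ge[of \<sigma> undefined] by (rule order_trans)
    have "Linf \<sigma> ^ CARD('n) \<le> 1" using L0 L1 by (simp add: power_le_one)
    moreover have "\<bar>T f \<sigma>\<bar> \<le> Linf \<sigma> ^ CARD('n) * integral\<^sup>L \<mu> (\<lambda>x. \<bar>f x\<bar>)"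
      using B Ds unfolding L_mass_bound_def by blast
    ultimately have "\<bar>T f \<sigma>\<bar> \<le> integral\<^sup>L \<mu> (\<lambda>x. \<bar>f x\<bar>)"
      using I by (smt (verit) mult_left_le_one_le zero_le_power L0)
    moreover have "(\<Prod>i\<in>UNIV. 1 / L i) = 1 / (\<Prod>i\<in>UNIV. L i)"
      by (simp add: prod_dividef)
    moreover have PL: "(\<Prod>i\<in>UNIV. L i) > 0" using Lpos by (simp add: prod_pos)
    ultimately have "\<bar>T f \<pi>\<bar> / (\<Prod>i\<in>UNIV. L i) \<le> integral\<^sup>L \<mu> (\<lambda>x. \<bar>f x\<bar>)"
      using Ts by (simp add: abs_mult)
    then show ?thesis using PL unfolding L_def by (simp add: divide_simps mult.commute)
  qed
qed

lemma bound_equiv: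
  fixes T :: "('a::metric_space \<Rightarrow> real) \<Rightarrow> ('n::finite \<Rightarrow> 'a \<Rightarrow> real) \<Rightarrow> real"
  assumes "multilinear_D T" "locality_D T"
  shows "L_mass_bound Linf T = AK_mass_bound T"
  using AK_imp_L L_imp_AK[OF assms] by blast

theorem proposition1p2:
  fixes T :: "('a::complete_space \<Rightarrow> real) \<Rightarrow> ('n::finite \<Rightarrow> 'a \<Rightarrow> real) \<Rightarrow> real"
  assumes "multilinear_D T"
  shows "(AK_current T \<longleftrightarrow> L_current Linf T) \<and>
         (AK_current T \<longrightarrow> (\<forall>\<mu>. AK_mass T \<mu> \<longleftrightarrow> L_mass Linf T \<mu>))"
proof -
  have c1: "AK_current T \<longleftrightarrow> L_current Linf T"
  proof
    assume A: "AK_current T"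
    then have "locality_D T" unfolding AK_current_def by blast
    then have E: "L_mass_bound Linf T = AK_mass_bound T" using bound_equiv assms by blast
    show "L_current Linf T" using A unfolding AK_current_def L_current_def E cont_equiv by blast
  next
    assume A: "L_current Linf T"
    then have "locality_D T" unfolding L_current_def by blast
    then have E: "L_mass_bound Linf T = AK_mass_bound T" using bound_equiv assms by blast
    show "AK_current T" using A unfolding AK_current_def L_current_def E cont_equiv by blast
  qed
  have c2: "AK_current T \<longrightarrow> (\<forall>\<mu>. AK_mass T \<mu> \<longleftrightarrow> L_mass Linf T \<mu>)"
  proof (intro impI allI)
    fix \<mu> assume A: "AK_current T"
    then have "locality_D T" unfolding AK_current_def by blast
    then have E: "L_mass_bound Linf T = AK_mass_bound T" using bound_equiv assms by blast
    show "AK_mass T \<mu> \<longleftrightarrow> L_mass Linf T \<mu>" unfolding AK_mass_def L_mass_def E ..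
  qed
  show ?thesis using c1 c2 by blast
qed

end
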